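(* In the four-price Devil's Menu described in the context (with $2\varepsilon<\delta\le V-\varepsilon$), let $$\bar B=\max_{S \subseteq \{1,\ldots,\bar{k}\},\ |S|=q} \left[ (V+\varepsilon) \sum_{k\in S} n^R_k+ \delta \sum_{k\in S} n^D_k + 2\varepsilon \sum_{k\notin S}n^D_k \right].$$ Starting from the profile in which every real voter applies for $s_1$ and every decoy voter applies for $s_2$, suppose exactly one decoy voter deviates and applies for $s_1$. Then, for every realization of the random selection, the adversary's total expenditure is at most $\bar B$.
   Context: There is a finite set $N$ of citizens partitioned into $\bar k>1$ districts $N_1,\dots,N_{\bar k}$; district $N_k$ contains $n_k^R\ge1$ real voters and $n_k^D$ decoy voters, $n_k=n_k^R+n_k^D>1$. Real voters value their ballot at $V>0$, decoy voters at $0$. Fix $1\le q\le\bar k-1$ and $\varepsilon>0$. Each citizen applies for slot $s_1$ or $s_2$. For district $k$ let $m_k$ be the number of $s_1$-applicants and $\rho_k=m_k/n_k^R$; let $\rho$ be the $q$-th smallest of $\rho_1,\dots,\rho_{\bar k}$, $C=\{k:\rho_k<\rho\}$, $T=\{k:\rho_k=\rho\}$, $c=|C|$, $t=|T|$. Districts in $C$ are selected and $q-c$ districts of $T$ are selected uniformly at random; the rest are non-selected. Prices offered: $s_1$ in a selected district $V+\varepsilon$; $s_2$ in a selected district $\delta$; $s_1$ in a non-selected district $\varepsilon$; $s_2$ in a non-selected district $2\varepsilon$. Each applicant sells his ballot iff the price strictly exceeds his valuation, and the adversary must pay the price for every ballot sold; the adversary's expenditure is the sum of these payments. *)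

theory Defs
  imports Complex_Main
begin

datatype slot = s1 | s2

text \<open>Citizens live in a finite set N; distr x is the district (in 1..kbar) of citizen x;
  rl x holds iff x is a real voter (otherwise a decoy); a x is the slot x applies for.\<close>

definition nR :: "'c set \<Rightarrow> ('c \<Rightarrow> nat) \<Rightarrow> ('c \<Rightarrow> bool) \<Rightarrow> nat \<Rightarrow> nat" where
  "nR N distr rl k = card {x \<in> N. distr x = k \<and> rl x}"

definition nD :: "'c set \<Rightarrow> ('c \<Rightarrow> nat) \<Rightarrow> ('c \<Rightarrow> bool) \<Rightarrow> nat \<Rightarrow> nat" where
  "nD N distr rl k = card {x \<in> N. distr x = k \<and> \<not> rl x}"

definition m_s1 :: "'c set \<Rightarrow> ('c \<Rightarrow> nat) \<Rightarrow> ('c \<Rightarrow> slot) \<Rightarrow> nat \<Rightarrow> nat" where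
  "m_s1 N distr a k = card {x \<in> N. distr x = k \<and> a x = s1}"

definition ratio :: "'c set \<Rightarrow> ('c \<Rightarrow> nat) \<Rightarrow> ('c \<Rightarrow> bool) \<Rightarrow> ('c \<Rightarrow> slot) \<Rightarrow> nat \<Rightarrow> real" where
  "ratio N distr rl a k = real (m_s1 N distr a k) / real (nR N distr rl k)"

definition qth_smallest :: "nat \<Rightarrow> nat \<Rightarrow> (nat \<Rightarrow> real) \<Rightarrow> real" where
  "qth_smallest kbar q f = sort (map f [1..<Suc kbar]) ! (q - 1)"

text \<open>All possible realizations of the set of selected districts: all of C plus q - c districts of T.\<close>
definition realizations :: "nat \<Rightarrow> nat \<Rightarrow> (nat \<Rightarrow> real) \<Rightarrow> nat set set" where
  "realizations kbar q f =
     (let r = qth_smallest kbar q f;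
          C = {k \<in> {1..kbar}. f k < r};
          T = {k \<in> {1..kbar}. f k = r}
      in {S. C \<subseteq> S \<and> S \<subseteq> C \<union> T \<and> card S = q})"

definition price :: "real \<Rightarrow> real \<Rightarrow> real \<Rightarrow> nat set \<Rightarrow> ('c \<Rightarrow> nat) \<Rightarrow> ('c \<Rightarrow> slot) \<Rightarrow> 'c \<Rightarrow> real" where
  "price V eps delta S distr a x =
     (if distr x \<in> S then (if a x = s1 then V + eps else delta)
      else (if a x = s1 then eps else 2 * eps))"

definition valuation :: "real \<Rightarrow> ('c \<Rightarrow> bool) \<Rightarrow> 'c \<Rightarrow> real" where
  "valuation V rl x = (if rl x then V else 0)"

definition expenditure :: "real \<Rightarrow> real \<Rightarrow> real \<Rightarrow> 'c set \<Rightarrow> ('c \<Rightarrow> nat) \<Rightarrow> ('c \<Rightarrow> bool)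
    \<Rightarrow> ('c \<Rightarrow> slot) \<Rightarrow> nat set \<Rightarrow> real" where
  "expenditure V eps delta N distr rl a S =
     (\<Sum>x\<in>N. if price V eps delta S distr a x > valuation V rl x
             then price V eps delta S distr a x else 0)"

definition Bbar :: "real \<Rightarrow> real \<Rightarrow> real \<Rightarrow> nat \<Rightarrow> nat \<Rightarrow> (nat \<Rightarrow> nat) \<Rightarrow> (nat \<Rightarrow> nat) \<Rightarrow> real" where
  "Bbar V eps delta kbar q nr nd =
     Max ((\<lambda>S. (V + eps) * (\<Sum>k\<in>S. real (nr k)) + delta * (\<Sum>k\<in>S. real (nd k))
               + 2 * eps * (\<Sum>k\<in>{1..kbar} - S. real (nd k)))
          ` {S. S \<subseteq> {1..kbar} \<and> card S = q})"

end

theory Submission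
  imports Defs
begin

lemma sorted_le_one:
  fixes xs :: "real list"
  assumes "sorted xs" "length (filter (\<lambda>x. x > 1) xs) \<le> 1" "i + 2 \<le> length xs"
  shows "xs ! i \<le> 1"
proof (rule ccontr)
  assume h: "\<not> xs ! i \<le> 1"
  let ?L = "length xs"
  have "xs ! i \<le> xs ! (?L - 2)" using assms by (intro sorted_nth_mono) auto
  hence a1: "xs ! (?L - 2) > 1" using h by linarith
  have "xs ! i \<le> xs ! (?L - 1)" using assms by (intro sorted_nth_mono) auto
  hence a2: "xs ! (?L - 1) > 1" using h by linarith
  have "{?L - 2, ?L - 1} \<subseteq> {j. j < ?L \<and> xs ! j > 1}" using a1 a2 assms(3) by auto
  hence "card {?L - 2, ?L - 1} \<le> card {j. j < ?L \<and> xs ! j > 1}" by (intro card_mono) auto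
  moreover have "card {?L - 2, ?L - 1} = 2" using assms(3) by auto
  ultimately show False using assms(2) by (simp add: length_filter_conv_card)
qed

theorem corollary1:
  fixes N :: "'c set" and distr :: "'c \<Rightarrow> nat" and rl :: "'c \<Rightarrow> bool"
    and a :: "'c \<Rightarrow> slot" and d :: 'c
    and kbar q :: nat and V eps delta :: real and S :: "nat set"
  assumes "finite N"
    and "\<forall>x\<in>N. distr x \<in> {1..kbar}"
    and "kbar > 1"
    and "\<forall>k\<in>{1..kbar}. nR N distr rl k \<ge> 1"
    and "\<forall>k\<in>{1..kbar}. nR N distr rl k + nD N distr rl k > 1"
    and "1 \<le> q" and "q \<le> kbar - 1"
    and "V > 0" and "eps > 0"
    and "2 * eps < delta" and "delta \<le> V - eps"
    and "d \<in> N" and "\<not> rl d"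
    and "a = (\<lambda>x. if rl x \<or> x = d then s1 else s2)"
    and "S \<in> realizations kbar q (ratio N distr rl a)"
  shows "expenditure V eps delta N distr rl a S
           \<le> Bbar V eps delta kbar q (nR N distr rl) (nD N distr rl)"
proof -
  note fin = assms(1)
  define f where "f = ratio N distr rl a"
  define k0 where "k0 = distr d"
  have k0in: "k0 \<in> {1..kbar}" using assms(2,12) k0_def by auto
  have rat_other: "f k = 1" if "k \<in> {1..kbar}" "k \<noteq> k0" for k
  proof -
    have "{x \<in> N. distr x = k \<and> a x = s1} = {x \<in> N. distr x = k \<and> rl x}"
      using that assms(14) k0_def by auto
    hence "m_s1 N distr a k = nR N distr rl k" by (simp add: m_s1_def nR_def)
    moreover have "nR N distr rl k \<ge> 1" using assms(4) that by blast
    ultimately show ?thesis by (simp add: f_def ratio_def)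
  qed
  have rat_k0: "f k0 > 1"
  proof -
    have "{x \<in> N. distr x = k0 \<and> a x = s1} = insert d {x \<in> N. distr x = k0 \<and> rl x}"
      using assms(12,14) k0_def by auto
    hence "m_s1 N distr a k0 = nR N distr rl k0 + 1"
      using assms(1,13) by (simp add: m_s1_def nR_def)
    moreover have "nR N distr rl k0 \<ge> 1" using assms(4) k0in by auto
    ultimately show ?thesis by (simp add: f_def ratio_def)
  qed
  define xs where "xs = sort (map f [1..<Suc kbar])"
  have filt: "length (filter (\<lambda>x. x > 1) xs) \<le> 1"
  proof -
    have "length (filter (\<lambda>x. x > 1) xs) = length (filter (\<lambda>k. f k > 1) [1..<Suc kbar])"
      unfolding xs_def filter_sort length_sort filter_map by (simp add: comp_def del: upt_Suc)
    also have "\<dots> = card (set (filter (\<lambda>k. f k > 1) [1..<Suc kbar]))"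
      by (rule distinct_card[symmetric]) simp
    also have "\<dots> \<le> card {k0}"
      using rat_other by (intro card_mono) fastforce+
    finally show ?thesis by simp
  qed
  have r_le: "qth_smallest kbar q f \<le> 1"
    unfolding qth_smallest_def xs_def[symmetric]
    by (rule sorted_le_one[OF _ filt]) (use assms(6,7) in \<open>auto simp: xs_def\<close>)
  obtain C T where CT: "C = {k \<in> {1..kbar}. f k < qth_smallest kbar q f}"
      "T = {k \<in> {1..kbar}. f k = qth_smallest kbar q f}"
      and Sp: "C \<subseteq> S" "S \<subseteq> C \<union> T" "card S = q"
    using assms(15) unfolding realizations_def f_def[symmetric] Let_def by auto
  have Ssub: "S \<subseteq> {1..kbar}" using Sp CT by auto
  have k0S: "k0 \<notin> S" using Sp CT r_le rat_k0 by auto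
  have Vpos: "eps < V" using assms(9,10,11) by linarith
  define h where "h x = (if distr x \<in> S then (if rl x then V + eps else delta)
      else (if rl x then 0 else 2 * eps))" for x
  have pt: "(if price V eps delta S distr a x > valuation V rl x
             then price V eps delta S distr a x else 0) \<le> h x" if "x \<in> N" for x
  proof (cases "x = d")
    case True
    then show ?thesis using k0S k0_def assms(13,14,9) Vpos
      by (simp add: price_def valuation_def h_def)
  next
    case False
    then show ?thesis using assms(14,9,10) Vpos
      by (simp add: price_def valuation_def h_def)
  qed
  have "expenditure V eps delta N distr rl a S \<le> sum h N"
    unfolding expenditure_def by (rule sum_mono) (use pt in auto)
  also have "sum h N = (\<Sum>k\<in>{1..kbar}. sum h {x \<in> N. distr x = k})"
    by (rule sum.group[symmetric]) (use fin assms(2) in auto)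
  also have "\<dots> = (\<Sum>k\<in>{1..kbar}. if k \<in> S then (V + eps) * real (nR N distr rl k)
       + delta * real (nD N distr rl k) else 2 * eps * real (nD N distr rl k))"
  proof (rule sum.cong[OF refl])
    fix k assume "k \<in> {1..kbar}"
    have split: "sum h {x \<in> N. distr x = k} = sum h {x \<in> N. distr x = k \<and> rl x}
        + sum h {x \<in> N. distr x = k \<and> \<not> rl x}"
      using fin by (subst sum.union_disjoint[symmetric]) (auto intro: sum.cong)
    show "sum h {x \<in> N. distr x = k} = (if k \<in> S then (V + eps) * real (nR N distr rl k)
       + delta * real (nD N distr rl k) else 2 * eps * real (nD N distr rl k))"
      unfolding split nR_def nD_def by (simp add: h_def)
  qed
  also have "\<dots> = (\<Sum>k\<in>S. (V + eps) * real (nR N distr rl k) + delta * real (nD N distr rl k))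
      + (\<Sum>k\<in>{1..kbar} - S. 2 * eps * real (nD N distr rl k))"
    using Ssub by (simp add: sum.If_cases Int_absorb1 Diff_eq)
  also have "\<dots> = (V + eps) * (\<Sum>k\<in>S. real (nR N distr rl k)) + delta * (\<Sum>k\<in>S. real (nD N distr rl k))
               + 2 * eps * (\<Sum>k\<in>{1..kbar} - S. real (nD N distr rl k))"
    by (simp add: sum.distrib sum_distrib_left)
  also have "\<dots> \<le> Bbar V eps delta kbar q (nR N distr rl) (nD N distr rl)"
    unfolding Bbar_def
    by (rule Max_ge) (use Ssub Sp in auto)
  finally show ?thesis .
qed

end
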